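(* If Dynamic A* (with \texttt{reeval} true or false) uses a dyn-admissible, dyn-monotonic and dyn-consistent dynamic heuristic, then the sequence of values $\hat g+\hat h$ of the entries $\langle s,\hat g,\hat h\rangle$ popped from Open, in the order they are popped, is non-decreasing.
   Context: A transition system is $\mathcal T=\langle S,L,c,T,s_I,S_G\rangle$ with finite states $S$, finite labels $L$, cost function $c:L\to\mathbb R_{\ge0}$, transitions $T\subseteq S\times L\times S$, initial state $s_I$, goal states $S_G\subseteq S$; $h^*(s)$ is the minimal cost of a path from $s$ to a goal ($\infty$ if none). An information source $\sigma$ consists of a set $\mathcal I_\sigma$, $\iota_0^\sigma\in\mathcal I_\sigma$, $\mathrm{update}_\sigma:\mathcal I_\sigma\times T\to\mathcal I_\sigma$, $\mathrm{refine}_\sigma:\mathcal I_\sigma\times S\to\mathcal I_\sigma$. Reachable information: $\iota_n$ is reachable if obtained from $\iota_0^\sigma$ by a sequence of refine steps on states and update steps on transitions $e_1,\dots,e_n$, where each refined state and each origin of an updated transition is $s_I$ or the target of an earlier updated transition. A dynamic heuristic over $\sigma$ is $h:S\times\mathcal I_\sigma\to\mathbb R_{\ge0}\cup\{\infty\}$. It is dyn-admissible if $h(s,\iota)\le h^*(s)$; dyn-consistent if $h(s,\iota)\le c(\ell)+h(s',\iota)$ for all $\langle s,\ell,s'\rangle\in T$; each for all states and all reachable $\iota$; and dyn-monotonic if $h(s,\iota)\le h(s,\mathrm{update}_\sigma(\iota,t))$ and $h(s,\iota)\le h(s,\mathrm{refine}_\sigma(\iota,s'))$ for all reachable $\iota$,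 all $s,s'\in S$, all $t\in T$. Parent source $\sigma_p$: $\mathcal I_{\sigma_p}$ = partial functions $S\rightharpoonup\mathbb R_{\ge0}\times(T\cup\{\bot\})$; $\iota_0=\{s_I\mapsto\langle0,\bot\rangle\}$; refine is the identity; $\mathrm{update}(\iota,\langle s,\ell,s'\rangle)$ with $\iota(s)=\langle g,\cdot\rangle$ changes only $s'$, setting it to $\langle g+c(\ell),\langle s,\ell,s'\rangle\rangle$ if $\iota(s')$ is undefined or has $g$-component $\ge g+c(\ell)$, otherwise unchanged. Dynamic A* takes $\mathcal T$, sources $\sigma_p,\sigma_h$, a dynamic heuristic $h$ over $\sigma_h$ and a Boolean flag \texttt{reeval}. Notation: at any moment $g(s)$ is the $g$-component of the current $\mathcal I(\sigma_p)(s)$ and $h(s)$ denotes $h(s,\mathcal I(\sigma_h))$ for the current $\mathcal I(\sigma_h)$. Open is a priority queue of entries $\langle s,g,h\rangle$ (duplicates allowed), popped by minimal stored value $g+h$ (ties arbitrary). Algorithm: 1. $\mathcal I(\sigma):=\iota_0^\sigma$ for both sources; $S_{\mathrm{known}}:=\{s_I\}$; Closed $:=\emptyset$; Open empty. If $h(s_I)<\infty$ insert $\langle s_I,g(s_I),h(s_I)\rangle$. 2. While Open is nonempty: pop an entry $\langle s,\hat g,\hat h\rangle$ of minimal $\hat g+\hat h$. If $s\in$ Closed, continue with the next iteration. Otherwise set $\mathcal I(\sigma):=\mathrm{refine}_\sigma(\mathcal I(\sigma),s)$ for both sources. If \texttt{reeval} is true and $\hat h<h(s)$: if $h(s)<\infty$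 insert $\langle s,g(s),h(s)\rangle$; continue with the next iteration (this is a re-evaluation). Otherwise add $s$ to Closed ($s$ is expanded). If $s\in S_G$, return the path obtained by following the parent pointers of $\mathcal I(\sigma_p)$ from $s$ back to $s_I$. Otherwise, for each $t=\langle s,\ell,s'\rangle\in T$ in some order: let $old:=g(s')$ if $s'\in S_{\mathrm{known}}$ and undefined otherwise; set $\mathcal I(\sigma):=\mathrm{update}_\sigma(\mathcal I(\sigma),t)$ for both sources; add $s'$ to $S_{\mathrm{known}}$; if $h(s')=\infty$ skip $s'$; else if $old$ is undefined insert $\langle s',g(s'),h(s')\rangle$; else if $old>g(s')$, remove $s'$ from Closed if it is there (reopening) and insert $\langle s',g(s'),h(s')\rangle$. 3. Return "unsolvable". *)

theory Defs
  imports "HOL-Analysis.Analysis" "HOL-Library.Multiset" "HOL-Library.Extended_Real"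
begin

type_synonym ('s,'l) trans = "'s \<times> 'l \<times> 's"

record ('s,'l) tsys =
  St    :: "'s set"
  Lb    :: "'l set"
  cost  :: "'l \<Rightarrow> real"
  Tr    :: "('s,'l) trans set"
  sinit :: 's
  goals :: "'s set"

definition wf_tsys :: "('s,'l) tsys \<Rightarrow> bool" where
  "wf_tsys TS \<longleftrightarrow> finite (St TS) \<and> finite (Lb TS)
     \<and> (\<forall>l\<in>Lb TS. cost TS l \<ge> 0)
     \<and> Tr TS \<subseteq> St TS \<times> Lb TS \<times> St TS
     \<and> sinit TS \<in> St TS \<and> goals TS \<subseteq> St TS"

fun tpath :: "('s,'l) trans set \<Rightarrow> 's \<Rightarrow> ('s,'l) trans list \<Rightarrow> 's \<Rightarrow> bool" where
  "tpath T s [] u \<longleftrightarrow> s = u"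
| "tpath T s ((a,l,b) # ts) u \<longleftrightarrow> (a,l,b) \<in> T \<and> a = s \<and> tpath T b ts u"

definition path_cost :: "('s,'l) tsys \<Rightarrow> ('s,'l) trans list \<Rightarrow> real" where
  "path_cost TS ts = sum_list (map (\<lambda>(a,l,b). cost TS l) ts)"

definition hstar :: "('s,'l) tsys \<Rightarrow> 's \<Rightarrow> ereal" where
  "hstar TS s = (INF ts \<in> {ts. \<exists>u\<in>goals TS. tpath (Tr TS) s ts u}. ereal (path_cost TS ts))"

record ('i,'s,'l) isrc =
  iota0 :: 'i
  upd   :: "'i \<Rightarrow> ('s,'l) trans \<Rightarrow> 'i"
  rfn   :: "'i \<Rightarrow> 's \<Rightarrow> 'i"

inductive reach_info :: "('s,'l) tsys \<Rightarrow> ('i,'s,'l) isrc \<Rightarrow> 'i \<Rightarrow> 's set \<Rightarrow> bool"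
  for TS \<sigma> where
  init: "reach_info TS \<sigma> (iota0 \<sigma>) {sinit TS}"
| refine: "reach_info TS \<sigma> \<iota> R \<Longrightarrow> s \<in> R \<Longrightarrow> reach_info TS \<sigma> (rfn \<sigma> \<iota> s) R"
| update: "reach_info TS \<sigma> \<iota> R \<Longrightarrow> (s,l,s') \<in> Tr TS \<Longrightarrow> s \<in> R
           \<Longrightarrow> reach_info TS \<sigma> (upd \<sigma> \<iota> (s,l,s')) (insert s' R)"

definition reachable_info :: "('s,'l) tsys \<Rightarrow> ('i,'s,'l) isrc \<Rightarrow> 'i \<Rightarrow> bool" where
  "reachable_info TS \<sigma> \<iota> \<longleftrightarrow> (\<exists>R. reach_info TS \<sigma> \<iota> R)"

definition dyn_heuristic :: "('s \<Rightarrow> 'i \<Rightarrow> ereal) \<Rightarrow> bool" where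
  "dyn_heuristic h \<longleftrightarrow> (\<forall>s \<iota>. h s \<iota> \<ge> 0)"

definition dyn_admissible ::
  "('s,'l) tsys \<Rightarrow> ('i,'s,'l) isrc \<Rightarrow> ('s \<Rightarrow> 'i \<Rightarrow> ereal) \<Rightarrow> bool" where
  "dyn_admissible TS \<sigma> h \<longleftrightarrow>
     (\<forall>s\<in>St TS. \<forall>\<iota>. reachable_info TS \<sigma> \<iota> \<longrightarrow> h s \<iota> \<le> hstar TS s)"

definition dyn_consistent ::
  "('s,'l) tsys \<Rightarrow> ('i,'s,'l) isrc \<Rightarrow> ('s \<Rightarrow> 'i \<Rightarrow> ereal) \<Rightarrow> bool" where
  "dyn_consistent TS \<sigma> h \<longleftrightarrow>
     (\<forall>s l s' \<iota>. (s,l,s') \<in> Tr TS \<longrightarrow> reachable_info TS \<sigma> \<iota> \<longrightarrow>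
        h s \<iota> \<le> ereal (cost TS l) + h s' \<iota>)"

definition dyn_monotonic ::
  "('s,'l) tsys \<Rightarrow> ('i,'s,'l) isrc \<Rightarrow> ('s \<Rightarrow> 'i \<Rightarrow> ereal) \<Rightarrow> bool" where
  "dyn_monotonic TS \<sigma> h \<longleftrightarrow>
     (\<forall>\<iota>. reachable_info TS \<sigma> \<iota> \<longrightarrow>
        (\<forall>s\<in>St TS. \<forall>t\<in>Tr TS. h s \<iota> \<le> h s (upd \<sigma> \<iota> t))
      \<and> (\<forall>s\<in>St TS. \<forall>s'\<in>St TS. h s \<iota> \<le> h s (rfn \<sigma> \<iota> s')))"

type_synonym ('s,'l) pinfo = "'s \<Rightarrow> (real \<times> ('s,'l) trans option) option"
  (* None as transition component plays the role of \<bottom> *)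

definition upd_parent :: "('s,'l) tsys \<Rightarrow> ('s,'l) pinfo \<Rightarrow> ('s,'l) trans \<Rightarrow> ('s,'l) pinfo" where
  "upd_parent TS \<iota> t = (case t of (s,l,s') \<Rightarrow>
     (case \<iota> s of None \<Rightarrow> \<iota>
      | Some (g,_) \<Rightarrow>
         (case \<iota> s' of
            None \<Rightarrow> \<iota>(s' \<mapsto> (g + cost TS l, Some t))
          | Some (g',_) \<Rightarrow> if g' \<ge> g + cost TS l then \<iota>(s' \<mapsto> (g + cost TS l, Some t)) else \<iota>)))"

definition parent_src :: "('s,'l) tsys \<Rightarrow> (('s,'l) pinfo,'s,'l) isrc" where
  "parent_src TS = \<lparr> iota0 = [sinit TS \<mapsto> (0, None)], upd = upd_parent TS, rfn = (\<lambda>\<iota> s. \<iota>) \<rparr>"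

definition gval :: "('s,'l) pinfo \<Rightarrow> 's \<Rightarrow> real" where
  "gval \<iota> s = fst (the (\<iota> s))"

type_synonym 's entry = "'s \<times> real \<times> ereal"

definition key :: "'s entry \<Rightarrow> ereal" where
  "key e = (case e of (s,g,h) \<Rightarrow> ereal g + h)"

record ('s,'l,'i) cfg =
  ip     :: "('s,'l) pinfo"
  ih     :: 'i
  known  :: "'s set"
  closed :: "'s set"
  opn    :: "'s entry multiset"
  popped :: "'s entry list"
  finished :: bool

definition astar_init ::
  "('s,'l) tsys \<Rightarrow> ('i,'s,'l) isrc \<Rightarrow> ('s \<Rightarrow> 'i \<Rightarrow> ereal) \<Rightarrow> ('s,'l,'i) cfg" where
  "astar_init TS \<sigma>h h =
     \<lparr> ip = iota0 (parent_src TS), ih = iota0 \<sigma>h, known = {sinit TS}, closed = {},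
       opn = (if h (sinit TS) (iota0 \<sigma>h) < \<infinity>
              then {# (sinit TS, gval (iota0 (parent_src TS)) (sinit TS), h (sinit TS) (iota0 \<sigma>h)) #}
              else {#}),
       popped = [], finished = False \<rparr>"

definition expand_succ ::
  "('s,'l) tsys \<Rightarrow> ('i,'s,'l) isrc \<Rightarrow> ('s \<Rightarrow> 'i \<Rightarrow> ereal) \<Rightarrow> ('s,'l) trans
     \<Rightarrow> ('s,'l,'i) cfg \<Rightarrow> ('s,'l,'i) cfg" where
  "expand_succ TS \<sigma>h h t C = (case t of (s,l,s') \<Rightarrow>
     (let old = (if s' \<in> known C then Some (gval (ip C) s') else None);
          ip' = upd (parent_src TS) (ip C) t;
          ih' = upd \<sigma>h (ih C) t;
          C1 = C\<lparr> ip := ip', ih := ih', known := insert s' (known C) \<rparr>;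
          hv = h s' ih';
          e = (s', gval ip' s', hv)
      in if hv = \<infinity> then C1
         else (case old of
                 None \<Rightarrow> C1\<lparr> opn := opn C1 + {#e#} \<rparr>
               | Some og \<Rightarrow> if og > gval ip' s'
                            then C1\<lparr> closed := closed C1 - {s'}, opn := opn C1 + {#e#} \<rparr>
                            else C1)))"

text \<open>One iteration of the main loop. The popped entry is any entry of minimal key;
  the successors are processed in an arbitrary order (any duplicate-free listing of
  the outgoing transitions).\<close>
inductive astar_step ::
  "('s,'l) tsys \<Rightarrow> ('i,'s,'l) isrc \<Rightarrow> ('s \<Rightarrow> 'i \<Rightarrow> ereal) \<Rightarrow> bool
     \<Rightarrow> ('s,'l,'i) cfg \<Rightarrow> ('s,'l,'i) cfg \<Rightarrow> bool"
  for TS \<sigma>h h reeval where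
  pop_closed:
    "\<not> finished C \<Longrightarrow> (s,g,hh) \<in># opn C \<Longrightarrow> (\<forall>e'\<in>#opn C. key (s,g,hh) \<le> key e')
     \<Longrightarrow> s \<in> closed C
     \<Longrightarrow> astar_step TS \<sigma>h h reeval C
           (C\<lparr> opn := opn C - {#(s,g,hh)#}, popped := popped C @ [(s,g,hh)] \<rparr>)"
| pop_reeval:
    "\<not> finished C \<Longrightarrow> (s,g,hh) \<in># opn C \<Longrightarrow> (\<forall>e'\<in>#opn C. key (s,g,hh) \<le> key e')
     \<Longrightarrow> s \<notin> closed C
     \<Longrightarrow> ih1 = rfn \<sigma>h (ih C) s \<Longrightarrow> ip1 = rfn (parent_src TS) (ip C) s
     \<Longrightarrow> reeval \<Longrightarrow> hh < h s ih1
     \<Longrightarrow> astar_step TS \<sigma>h h reeval C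
           (C\<lparr> ip := ip1, ih := ih1,
               opn := opn C - {#(s,g,hh)#}
                      + (if h s ih1 < \<infinity> then {#(s, gval ip1 s, h s ih1)#} else {#}),
               popped := popped C @ [(s,g,hh)] \<rparr>)"
| pop_goal:
    "\<not> finished C \<Longrightarrow> (s,g,hh) \<in># opn C \<Longrightarrow> (\<forall>e'\<in>#opn C. key (s,g,hh) \<le> key e')
     \<Longrightarrow> s \<notin> closed C
     \<Longrightarrow> ih1 = rfn \<sigma>h (ih C) s \<Longrightarrow> ip1 = rfn (parent_src TS) (ip C) s
     \<Longrightarrow> \<not> (reeval \<and> hh < h s ih1)
     \<Longrightarrow> s \<in> goals TS
     \<Longrightarrow> astar_step TS \<sigma>h h reeval C
           (C\<lparr> ip := ip1, ih := ih1, closed := insert s (closed C),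
               opn := opn C - {#(s,g,hh)#},
               popped := popped C @ [(s,g,hh)], finished := True \<rparr>)"
| pop_expand:
    "\<not> finished C \<Longrightarrow> (s,g,hh) \<in># opn C \<Longrightarrow> (\<forall>e'\<in>#opn C. key (s,g,hh) \<le> key e')
     \<Longrightarrow> s \<notin> closed C
     \<Longrightarrow> ih1 = rfn \<sigma>h (ih C) s \<Longrightarrow> ip1 = rfn (parent_src TS) (ip C) s
     \<Longrightarrow> \<not> (reeval \<and> hh < h s ih1)
     \<Longrightarrow> s \<notin> goals TS
     \<Longrightarrow> distinct ts \<Longrightarrow> set ts = {t \<in> Tr TS. fst t = s}
     \<Longrightarrow> astar_step TS \<sigma>h h reeval C
           (fold (expand_succ TS \<sigma>h h) ts
              (C\<lparr> ip := ip1, ih := ih1, closed := insert s (closed C),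
                  opn := opn C - {#(s,g,hh)#},
                  popped := popped C @ [(s,g,hh)] \<rparr>))"

end

theory Submission imports Defs begin

definition Inv :: "('s,'l) tsys \<Rightarrow> ('i,'s,'l) isrc \<Rightarrow> ('s \<Rightarrow> 'i \<Rightarrow> ereal) \<Rightarrow> ('s,'l,'i) cfg \<Rightarrow> bool" where
  "Inv TS \<sigma>h h C \<longleftrightarrow>
     reach_info TS \<sigma>h (ih C) (known C)
   \<and> known C \<subseteq> St TS
   \<and> dom (ip C) = known C
   \<and> (\<forall>e\<in>#opn C. fst e \<in> known C)
   \<and> (\<forall>u\<in>known C. u \<notin> closed C \<longrightarrow> h u (ih C) < \<infinity> \<longrightarrow>
        (\<exists>hh. (u, gval (ip C) u, hh) \<in># opn C \<and> hh \<le> h u (ih C)))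
   \<and> sorted (map key (popped C))
   \<and> (\<forall>x\<in>set (popped C). \<forall>e\<in>#opn C. key x \<le> key e)"

lemma upd_parent_other:
  "u \<noteq> s' \<Longrightarrow> upd_parent TS P (s,l,s') u = P u"
  by (auto simp: upd_parent_def split: option.splits)

lemma upd_parent_tgt:
  assumes "P s = Some (g,x)"
  shows "upd_parent TS P (s,l,s') s' \<noteq> None"
    and "gval (upd_parent TS P (s,l,s')) s' = (case P s' of None \<Rightarrow> g + cost TS l
            | Some (og,_) \<Rightarrow> if og \<ge> g + cost TS l then g + cost TS l else og)"
  using assms by (auto simp: upd_parent_def gval_def split: option.splits)

lemma mono_upd:
  "dyn_monotonic TS \<sigma> h \<Longrightarrow> reach_info TS \<sigma> \<iota> R \<Longrightarrow> u \<in> St TS \<Longrightarrow> t \<in> Tr TS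
   \<Longrightarrow> h u \<iota> \<le> h u (upd \<sigma> \<iota> t)"
  unfolding dyn_monotonic_def reachable_info_def by blast

lemma mono_rfn:
  "dyn_monotonic TS \<sigma> h \<Longrightarrow> reach_info TS \<sigma> \<iota> R \<Longrightarrow> u \<in> St TS \<Longrightarrow> s \<in> St TS
   \<Longrightarrow> h u \<iota> \<le> h u (rfn \<sigma> \<iota> s)"
  unfolding dyn_monotonic_def reachable_info_def by blast

lemma cons_app:
  "dyn_consistent TS \<sigma> h \<Longrightarrow> reach_info TS \<sigma> \<iota> R \<Longrightarrow> (s,l,s') \<in> Tr TS
   \<Longrightarrow> h s \<iota> \<le> ereal (cost TS l) + h s' \<iota>"
  unfolding dyn_consistent_def reachable_info_def by blast

lemma min_bound:
  assumes "Inv TS \<sigma>h h C" "(s,g,hh) \<in># opn C" "\<forall>e'\<in>#opn C. key (s,g,hh) \<le> key e'"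
    "s \<notin> closed C" "h s (ih C) \<le> H"
  shows "key (s,g,hh) \<le> ereal (gval (ip C) s) + H"
proof (cases "h s (ih C) < \<infinity>")
  case True
  have "s \<in> known C" using assms(1,2) unfolding Inv_def by force
  then obtain hh' where w: "(s, gval (ip C) s, hh') \<in># opn C" "hh' \<le> h s (ih C)"
    using assms(1,4) True unfolding Inv_def by blast
  have "key (s,g,hh) \<le> key (s, gval (ip C) s, hh')" using assms(3) w(1) by blast
  also have "\<dots> = ereal (gval (ip C) s) + hh'" by (simp add: key_def)
  also have "\<dots> \<le> ereal (gval (ip C) s) + H" using w(2) assms(5) by (intro add_left_mono) auto
  finally show ?thesis .
next
  case False
  then have "H = \<infinity>" using assms(5) by (cases "h s (ih C)"; cases H) auto
  then show ?thesis by simp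
qed


lemma expand_succ_cases:
  fixes C :: "('s,'l,'i) cfg" and TS :: "('s,'l) tsys" and \<sigma>h :: "('i,'s,'l) isrc"
    and h :: "'s \<Rightarrow> 'i \<Rightarrow> ereal" and s s' :: 's and l :: 'l
  defines "ip' \<equiv> upd_parent TS (ip C) (s,l,s')"
      and "ih' \<equiv> upd \<sigma>h (ih C) (s,l,s')"
      and "R \<equiv> expand_succ TS \<sigma>h h (s,l,s') C"
  shows "ip R = ip' \<and> ih R = ih' \<and> known R = insert s' (known C) \<and> popped R = popped C
     \<and> ((opn R = opn C \<and> closed R = closed C \<and>
           (h s' ih' = \<infinity> \<or> (s' \<in> known C \<and> \<not> gval (ip C) s' > gval ip' s')))
       \<or> (opn R = opn C + {#(s', gval ip' s', h s' ih')#} \<and> closed R \<subseteq> closed C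
          \<and> closed C - {s'} \<subseteq> closed R \<and> h s' ih' \<noteq> \<infinity>
          \<and> (s' \<notin> known C \<or> gval (ip C) s' > gval ip' s')))"
  unfolding R_def expand_succ_def ip'_def ih'_def
  by (auto simp: Let_def parent_src_def)


definition J where
  "J TS \<sigma>h h k s C \<longleftrightarrow> Inv TS \<sigma>h h C \<and> s \<in> known C \<and> (\<forall>x\<in>set (popped C). key x \<le> k)
     \<and> k \<le> ereal (gval (ip C) s) + h s (ih C)"

lemma expand_succ_J:
  assumes wf: "wf_tsys TS" and mon: "dyn_monotonic TS \<sigma>h h" and con: "dyn_consistent TS \<sigma>h h"
    and JC: "J TS \<sigma>h h k s C" and tr: "(s,l,s') \<in> Tr TS"
  shows "J TS \<sigma>h h k s (expand_succ TS \<sigma>h h (s,l,s') C)"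
proof -
  define ip' where "ip' = upd_parent TS (ip C) (s,l,s')"
  define ih' where "ih' = upd \<sigma>h (ih C) (s,l,s')"
  define R where "R = expand_succ TS \<sigma>h h (s,l,s') C"
  note cs = expand_succ_cases[where TS=TS and C=C and s=s and l=l and s'=s' and \<sigma>h=\<sigma>h and h=h, folded ip'_def ih'_def R_def]
  have I: "Inv TS \<sigma>h h C" and sK: "s \<in> known C" and pk: "\<forall>x\<in>set (popped C). key x \<le> k"
    and kb: "k \<le> ereal (gval (ip C) s) + h s (ih C)" using JC unfolding J_def by auto
  have ri: "reach_info TS \<sigma>h (ih C) (known C)" and KS: "known C \<subseteq> St TS"
    and dm: "dom (ip C) = known C" and ok: "\<forall>e\<in>#opn C. fst e \<in> known C"
    and wit: "\<forall>u\<in>known C. u \<notin> closed C \<longrightarrow> h u (ih C) < \<infinity> \<longrightarrow>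
        (\<exists>hh. (u, gval (ip C) u, hh) \<in># opn C \<and> hh \<le> h u (ih C))"
    and so: "sorted (map key (popped C))"
    and po: "\<forall>x\<in>set (popped C). \<forall>e\<in>#opn C. key x \<le> key e"
    using I unfolding Inv_def by auto
  obtain g x where ipS: "ip C s = Some (g,x)" using dm sK by fastforce
  have gs: "gval (ip C) s = g" using ipS by (simp add: gval_def)
  have lL: "l \<in> Lb TS" and s'S: "s' \<in> St TS" and sS: "s \<in> St TS"
    using wf tr unfolding wf_tsys_def by auto
  have c0: "cost TS l \<ge> 0" using wf lL unfolding wf_tsys_def by auto
  have ri': "reach_info TS \<sigma>h ih' (insert s' (known C))"
    unfolding ih'_def using ri tr sK by (rule reach_info.update)
  have monu: "\<And>u. u \<in> St TS \<Longrightarrow> h u (ih C) \<le> h u ih'"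
    unfolding ih'_def using mon ri _ tr by (rule mono_upd)
  have cns: "h s ih' \<le> ereal (cost TS l) + h s' ih'" using con ri' tr by (rule cons_app)
  have oth: "\<And>u. u \<noteq> s' \<Longrightarrow> ip' u = ip C u" unfolding ip'_def by (rule upd_parent_other)
  have tgtN: "ip' s' \<noteq> None" unfolding ip'_def using ipS by (rule upd_parent_tgt)
  have gv': "gval ip' s' = (case ip C s' of None \<Rightarrow> g + cost TS l
            | Some (og,_) \<Rightarrow> if og \<ge> g + cost TS l then g + cost TS l else og)"
    unfolding ip'_def using ipS by (rule upd_parent_tgt)
  have gle: "s' \<in> known C \<Longrightarrow> gval ip' s' \<le> gval (ip C) s'"
    using gv' dm by (auto simp: gval_def split: option.splits)
  have gsnew: "gval ip' s \<ge> g"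
  proof (cases "s = s'")
    case True then show ?thesis using gv' ipS c0 by auto
  next
    case False then show ?thesis using oth gs by (simp add: gval_def)
  qed
  have ins_g: "gval ip' s' = g + cost TS l" if "s' \<notin> known C \<or> gval (ip C) s' > gval ip' s'"
  proof (cases "ip C s'")
    case None then show ?thesis using gv' by simp
  next
    case (Some a)
    then obtain og y where a: "ip C s' = Some (og,y)" by (cases a) auto
    then have "gval (ip C) s' = og" by (simp add: gval_def)
    moreover have "s' \<in> known C" using a dm by auto
    ultimately show ?thesis using that gv' a by (auto split: if_splits)
  qed
  have keynew: "k \<le> ereal (gval ip' s') + h s' ih'"
    if "s' \<notin> known C \<or> gval (ip C) s' > gval ip' s'"
  proof -
    have "k \<le> ereal g + h s ih'" using kb gs monu[OF sS] by (metis add_left_mono order.trans)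
    also have "\<dots> \<le> ereal g + (ereal (cost TS l) + h s' ih')" using cns by (rule add_left_mono)
    also have "\<dots> = ereal (gval ip' s') + h s' ih'" using ins_g[OF that] by (simp add: add.assoc[symmetric] plus_ereal.simps(1)[symmetric] del: plus_ereal.simps)
    finally show ?thesis .
  qed
  have "Inv TS \<sigma>h h R"
    unfolding Inv_def
  proof (intro conjI)
    show "reach_info TS \<sigma>h (ih R) (known R)" using cs ri' by simp
    show "known R \<subseteq> St TS" using cs KS s'S by simp
    have "dom ip' = insert s' (dom (ip C))"
    proof (rule set_eqI)
      fix u show "u \<in> dom ip' \<longleftrightarrow> u \<in> insert s' (dom (ip C))"
        using oth[of u] tgtN by (cases "u = s'") (auto simp: dom_def)
    qed
    then show "dom (ip R) = known R" using cs dm by simp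
    show "\<forall>e\<in>#opn R. fst e \<in> known R" using cs ok by auto
    show "sorted (map key (popped R))" using cs so by simp
    show "\<forall>x\<in>set (popped R). \<forall>e\<in>#opn R. key x \<le> key e"
    proof (intro ballI)
      fix x e assume x: "x \<in> set (popped R)" and e: "e \<in># opn R"
      from cs consider (a) "opn R = opn C"
        | (b) "opn R = opn C + {#(s', gval ip' s', h s' ih')#}" "s' \<notin> known C \<or> gval (ip C) s' > gval ip' s'"
        by blast
      then show "key x \<le> key e"
      proof cases
        case a then show ?thesis using x e po cs by auto
      next
        case b
        show ?thesis
        proof (cases "e \<in># opn C")
          case True then show ?thesis using x po cs by auto
        next
          case False
          then have "e = (s', gval ip' s', h s' ih')" using e b by auto
          then have "k \<le> key e" using keynew[OF b(2)] by (simp add: key_def)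
          moreover have "key x \<le> k" using x pk cs by auto
          ultimately show ?thesis by simp
        qed
      qed
    qed
    show "\<forall>u\<in>known R. u \<notin> closed R \<longrightarrow> h u (ih R) < \<infinity> \<longrightarrow>
        (\<exists>hh. (u, gval (ip R) u, hh) \<in># opn R \<and> hh \<le> h u (ih R))"
    proof (intro ballI impI)
      fix u assume uK: "u \<in> known R" and uc: "u \<notin> closed R" and uh: "h u (ih R) < \<infinity>"
      show "\<exists>hh. (u, gval (ip R) u, hh) \<in># opn R \<and> hh \<le> h u (ih R)"
      proof (cases "u = s'")
        case False
        have uK0: "u \<in> known C" using uK cs False by auto
        have uc0: "u \<notin> closed C" using uc cs False by auto
        have hm: "h u (ih C) \<le> h u ih'" using monu KS uK0 by auto
        have "h u (ih C) < \<infinity>" using uh cs hm by auto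
        then obtain hh where "(u, gval (ip C) u, hh) \<in># opn C" "hh \<le> h u (ih C)"
          using wit uK0 uc0 by blast
        moreover have "gval ip' u = gval (ip C) u" using oth False by (simp add: gval_def)
        ultimately show ?thesis using cs hm by (auto intro: order.trans)
      next
        case True
        from cs consider
          (a) "opn R = opn C" "closed R = closed C" "h s' ih' = \<infinity> \<or> (s' \<in> known C \<and> \<not> gval (ip C) s' > gval ip' s')"
        | (b) "opn R = opn C + {#(s', gval ip' s', h s' ih')#}" by blast
        then show ?thesis
        proof cases
          case a
          have "h s' ih' \<noteq> \<infinity>" using uh True cs by auto
          then have sK': "s' \<in> known C" and ng: "\<not> gval (ip C) s' > gval ip' s'" using a by auto
          have eq: "gval ip' s' = gval (ip C) s'" using gle[OF sK'] ng by auto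
          have hm: "h s' (ih C) \<le> h s' ih'" using monu s'S by auto
          have "h s' (ih C) < \<infinity>" using uh True cs hm by auto
          then obtain hh where "(s', gval (ip C) s', hh) \<in># opn C" "hh \<le> h s' (ih C)"
            using wit sK' uc True a by auto
          then show ?thesis using True a cs eq hm by (auto intro: order.trans)
        next
          case b then show ?thesis using True cs by auto
        qed
      qed
    qed
  qed
  moreover have "s \<in> known R" using cs sK by simp
  moreover have "\<forall>x\<in>set (popped R). key x \<le> k" using cs pk by simp
  moreover have "k \<le> ereal (gval (ip R) s) + h s (ih R)"
  proof -
    have "k \<le> ereal g + h s (ih C)" using kb gs by simp
    also have "\<dots> \<le> ereal (gval ip' s) + h s ih'"
      using gsnew monu[OF sS] by (intro add_mono) auto
    finally show ?thesis using cs by simp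
  qed
  ultimately show ?thesis unfolding J_def R_def by blast
qed


lemma fold_J:
  assumes wf: "wf_tsys TS" and mon: "dyn_monotonic TS \<sigma>h h" and con: "dyn_consistent TS \<sigma>h h"
  shows "\<forall>t\<in>set ts. t \<in> Tr TS \<and> fst t = s \<Longrightarrow> J TS \<sigma>h h k s C
     \<Longrightarrow> J TS \<sigma>h h k s (fold (expand_succ TS \<sigma>h h) ts C)"
proof (induction ts arbitrary: C)
  case Nil then show ?case by simp
next
  case (Cons t ts)
  obtain a l b where t: "t = (a,l,b)" by (cases t) auto
  have "a = s" "(s,l,b) \<in> Tr TS" using Cons.prems(1) t by auto
  then have "J TS \<sigma>h h k s (expand_succ TS \<sigma>h h t C)"
    using expand_succ_J[OF wf mon con Cons.prems(2)] t by simp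
  then show ?case using Cons by simp
qed

lemma Inv_init:
  assumes "wf_tsys TS"
  shows "Inv TS \<sigma>h h (astar_init TS \<sigma>h h)"
  using assms unfolding Inv_def astar_init_def wf_tsys_def
  by (auto simp: parent_src_def gval_def intro: reach_info.init)


lemma pop_generic:
  assumes I: "Inv TS \<sigma>h h C" and pin: "p \<in># opn C" and pmin: "\<forall>e'\<in>#opn C. key p \<le> key e'"
    and ps: "fst p = s"
    and ipe: "ip C' = ip C" and kne: "known C' = known C" and pope: "popped C' = popped C @ [p]"
    and ri: "reach_info TS \<sigma>h (ih C') (known C)"
    and hm: "\<forall>u\<in>St TS. h u (ih C) \<le> h u (ih C')"
    and cl: "closed C - {s} \<subseteq> closed C'"
    and op: "opn C' = opn C - {#p#} + N" and Nk: "\<forall>e\<in>#N. fst e = s \<and> key p \<le> key e"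
    and Nw: "s \<notin> closed C' \<longrightarrow> h s (ih C') < \<infinity> \<longrightarrow>
              (\<exists>hh. (s, gval (ip C) s, hh) \<in># N \<and> hh \<le> h s (ih C'))"
  shows "Inv TS \<sigma>h h C'"
proof -
  have KS: "known C \<subseteq> St TS"
    and dm: "dom (ip C) = known C" and ok: "\<forall>e\<in>#opn C. fst e \<in> known C"
    and wit: "\<forall>u\<in>known C. u \<notin> closed C \<longrightarrow> h u (ih C) < \<infinity> \<longrightarrow>
        (\<exists>hh. (u, gval (ip C) u, hh) \<in># opn C \<and> hh \<le> h u (ih C))"
    and so: "sorted (map key (popped C))"
    and po: "\<forall>x\<in>set (popped C). \<forall>e\<in>#opn C. key x \<le> key e"
    using I unfolding Inv_def by auto
  have sK: "s \<in> known C" using ok pin ps by auto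
  have sub: "\<And>e. e \<in># opn C - {#p#} \<Longrightarrow> e \<in># opn C" by (meson in_diffD)
  show ?thesis unfolding Inv_def
  proof (intro conjI)
    show "reach_info TS \<sigma>h (ih C') (known C')" using ri kne by simp
    show "known C' \<subseteq> St TS" using KS kne by simp
    show "dom (ip C') = known C'" using dm kne ipe by simp
    show "\<forall>e\<in>#opn C'. fst e \<in> known C'" using op ok sub Nk sK kne by auto
    show "sorted (map key (popped C'))" using pope so po pin by (auto simp: sorted_append)
    show "\<forall>x\<in>set (popped C'). \<forall>e\<in>#opn C'. key x \<le> key e"
    proof (intro ballI)
      fix x e assume x: "x \<in> set (popped C')" and e: "e \<in># opn C'"
      have xp: "key x \<le> key p" using x pope po pin by auto
      show "key x \<le> key e"
      proof (cases "e \<in># N")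
        case True then show ?thesis using Nk xp by (auto intro: order.trans)
      next
        case False
        then have "e \<in># opn C" using e op sub by auto
        then show ?thesis using x pope po pmin by auto
      qed
    qed
    show "\<forall>u\<in>known C'. u \<notin> closed C' \<longrightarrow> h u (ih C') < \<infinity> \<longrightarrow>
        (\<exists>hh. (u, gval (ip C') u, hh) \<in># opn C' \<and> hh \<le> h u (ih C'))"
    proof (intro ballI impI)
      fix u assume uK: "u \<in> known C'" and uc: "u \<notin> closed C'" and uh: "h u (ih C') < \<infinity>"
      show "\<exists>hh. (u, gval (ip C') u, hh) \<in># opn C' \<and> hh \<le> h u (ih C')"
      proof (cases "u = s")
        case True then show ?thesis using Nw uc uh ipe op by auto
      next
        case False
        have uK0: "u \<in> known C" using uK kne by simp
        have uc0: "u \<notin> closed C" using uc cl False by auto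
        have hm': "h u (ih C) \<le> h u (ih C')" using hm KS uK0 by auto
        have "h u (ih C) < \<infinity>" using uh hm' by auto
        then obtain hh where w: "(u, gval (ip C) u, hh) \<in># opn C" "hh \<le> h u (ih C)"
          using wit uK0 uc0 by blast
        have "(u, gval (ip C) u, hh) \<noteq> p" using False ps by auto
        then have "(u, gval (ip C) u, hh) \<in># opn C - {#p#}" using w(1)
          by (simp add: in_diff_count)
        then show ?thesis using w(2) hm' op ipe by (auto intro: order.trans)
      qed
    qed
  qed
qed


lemma step_Inv:
  assumes wf: "wf_tsys TS" and mon: "dyn_monotonic TS \<sigma>h h" and con: "dyn_consistent TS \<sigma>h h"
    and st: "astar_step TS \<sigma>h h reeval C C'" and I: "Inv TS \<sigma>h h C"
  shows "Inv TS \<sigma>h h C'"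
  using st
proof cases
  case (pop_closed s g hh)
  show ?thesis
    by (rule pop_generic[OF I pop_closed(3,4), where s=s and N="{#}"])
       (use pop_closed I in \<open>auto simp: Inv_def\<close>)
next
  case (pop_reeval s g hh ih1 ip1)
  have KS: "known C \<subseteq> St TS" and ri: "reach_info TS \<sigma>h (ih C) (known C)"
    and ok: "\<forall>e\<in>#opn C. fst e \<in> known C" using I unfolding Inv_def by auto
  have sK: "s \<in> known C" using ok pop_reeval(3) by force
  have sS: "s \<in> St TS" using sK KS by auto
  have hm: "\<forall>u\<in>St TS. h u (ih C) \<le> h u ih1"
    using pop_reeval(6) mon ri sS by (auto intro: mono_rfn)
  have kb: "key (s,g,hh) \<le> ereal (gval (ip C) s) + h s ih1"
    using min_bound[OF I pop_reeval(3,4,5)] hm sS by auto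
  have ipe: "ip1 = ip C" using pop_reeval(7) by (simp add: parent_src_def)
  show ?thesis
    by (rule pop_generic[OF I pop_reeval(3,4), where s=s
          and N="if h s ih1 < \<infinity> then {#(s, gval ip1 s, h s ih1)#} else {#}"])
       (use pop_reeval ipe kb hm sK in \<open>auto simp: key_def intro: reach_info.refine ri\<close>)
next
  case (pop_goal s g hh ih1 ip1)
  have KS: "known C \<subseteq> St TS" and ri: "reach_info TS \<sigma>h (ih C) (known C)"
    and ok: "\<forall>e\<in>#opn C. fst e \<in> known C" using I unfolding Inv_def by auto
  have sK: "s \<in> known C" using ok pop_goal(3) by force
  have sS: "s \<in> St TS" using sK KS by auto
  have hm: "\<forall>u\<in>St TS. h u (ih C) \<le> h u ih1"
    using pop_goal(6) mon ri sS by (auto intro: mono_rfn)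
  have ipe: "ip1 = ip C" using pop_goal(7) by (simp add: parent_src_def)
  show ?thesis
    by (rule pop_generic[OF I pop_goal(3,4), where s=s and N="{#}"])
       (use pop_goal ipe hm sK in \<open>auto intro: reach_info.refine ri\<close>)
next
  case (pop_expand s g hh ih1 ip1 ts)
  have KS: "known C \<subseteq> St TS" and ri: "reach_info TS \<sigma>h (ih C) (known C)"
    and ok: "\<forall>e\<in>#opn C. fst e \<in> known C"
    and po: "\<forall>x\<in>set (popped C). \<forall>e\<in>#opn C. key x \<le> key e" using I unfolding Inv_def by auto
  have sK: "s \<in> known C" using ok pop_expand(3) by force
  have sS: "s \<in> St TS" using sK KS by auto
  have hm: "\<forall>u\<in>St TS. h u (ih C) \<le> h u ih1"
    using pop_expand(6) mon ri sS by (auto intro: mono_rfn)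
  have ipe: "ip1 = ip C" using pop_expand(7) by (simp add: parent_src_def)
  have kb: "key (s,g,hh) \<le> ereal (gval (ip C) s) + h s ih1"
    using min_bound[OF I pop_expand(3,4,5)] hm sS by auto
  define C0 where "C0 = C\<lparr> ip := ip1, ih := ih1, closed := insert s (closed C),
                  opn := opn C - {#(s,g,hh)#},
                  popped := popped C @ [(s,g,hh)] \<rparr>"
  have I0: "Inv TS \<sigma>h h C0"
    unfolding C0_def
    by (rule pop_generic[OF I pop_expand(3,4), where s=s and N="{#}"])
       (use pop_expand ipe hm sK in \<open>auto intro: reach_info.refine ri\<close>)
  have "J TS \<sigma>h h (key (s,g,hh)) s C0"
    unfolding J_def using I0 sK kb ipe po pop_expand(3) by (auto simp: C0_def)
  then have "J TS \<sigma>h h (key (s,g,hh)) s (fold (expand_succ TS \<sigma>h h) ts C0)"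
    using fold_J[OF wf mon con, of ts s] pop_expand(11) by auto
  then show ?thesis using pop_expand(1) unfolding J_def C0_def by simp
qed

theorem theorem6:
  fixes TS :: "('s,'l) tsys" and \<sigma>h :: "('i,'s,'l) isrc"
    and h :: "'s \<Rightarrow> 'i \<Rightarrow> ereal" and reeval :: bool
    and C :: "('s,'l,'i) cfg"
  assumes "wf_tsys TS"
    and "dyn_heuristic h"
    and "dyn_admissible TS \<sigma>h h"
    and "dyn_monotonic TS \<sigma>h h"
    and "dyn_consistent TS \<sigma>h h"
    and "(astar_step TS \<sigma>h h reeval)\<^sup>*\<^sup>* (astar_init TS \<sigma>h h) C"
  shows "sorted (map key (popped C))"
proof -
  have "Inv TS \<sigma>h h C"
    using assms(6)
  proof (induction rule: rtranclp_induct)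
    case base then show ?case using Inv_init[OF assms(1)] .
  next
    case (step y z) then show ?case using step_Inv[OF assms(1,4,5)] by blast
  qed
  then show ?thesis unfolding Inv_def by simp
qed

end
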